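(* Let $\mathbb{T}$ be a time scale, $a<b$ in $\mathbb{T}$, and let $d,f$ be continuous functions on $[a,b]_{\mathbb{T}}$ such that $1+\mu(t)d(t)\neq 0$ for all $t\in[a,b]_{\mathbb{T}}$ and $$\sup_{t\in[a,b]_{\mathbb{T}}}|e_d(t,a)|\int_a^t|e_d(a,\sigma(s))|\,\Delta s<\infty.$$ Then the first-order dynamic equation $$x^{\Delta}(t)-d(t)x(t)-f(t)=0,\quad t\in[a,b]_{\mathbb{T}},$$ has Hyers–Ulam stability: for every $\varepsilon>0$, whenever $g\in C^1_{rd}([a,b]_{\mathbb{T}})$ satisfies $|g^{\Delta}(t)-d(t)g(t)-f(t)|\le\varepsilon$ for all $t\in[a,b]_{\mathbb{T}}$, there exists a solution $w\in C^1_{rd}([a,b]_{\mathbb{T}})$ of $w^\Delta-dw-f=0$ on $[a,b]_{\mathbb{T}}$ such that $|g(t)-w(t)|\le L\varepsilon$ for all $t\in[a,b]_{\mathbb{T}}$, for some constant $L>0$.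
   Context: A time scale $\mathbb{T}$ is a nonempty closed subset of $\mathbb{R}$; $[a,b]_{\mathbb{T}}:=[a,b]\cap\mathbb{T}$. $\sigma(t)=\inf\{s\in\mathbb{T}:s>t\}$ is the forward jump operator, $\mu(t)=\sigma(t)-t$ the graininess, $f^\Delta$ the delta derivative, and $\int\cdots\Delta s$ the delta integral. $C^1_{rd}([a,b]_{\mathbb{T}})$ denotes delta differentiable functions with rd-continuous delta derivative. For a regressive rd-continuous function $d$ (i.e. $1+\mu d\neq0$), $e_d(t,s)$ denotes the time-scale exponential function, the unique solution of $x^\Delta=d(t)x$, $x(s)=1$. *)

theory Defs
  imports "HOL-Analysis.Analysis"
begin

definition time_scale :: "real set \<Rightarrow> bool" where
  "time_scale T \<longleftrightarrow> closed T \<and> T \<noteq> {}"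

definition sigma :: "real set \<Rightarrow> real \<Rightarrow> real" where
  "sigma T t = (if \<exists>s\<in>T. s > t then Inf {s\<in>T. s > t} else t)"

definition mu :: "real set \<Rightarrow> real \<Rightarrow> real" where
  "mu T t = sigma T t - t"

text \<open>Delta derivative (Hilger / Bohner--Peterson definition) at a point t of T.\<close>
definition has_delta_derivative :: "real set \<Rightarrow> (real \<Rightarrow> real) \<Rightarrow> real \<Rightarrow> real \<Rightarrow> bool" where
  "has_delta_derivative T f D t \<longleftrightarrow> t \<in> T \<and>
     (\<forall>e>0. \<exists>\<delta>>0. \<forall>s\<in>T. \<bar>s - t\<bar> < \<delta> \<longrightarrow>
        \<bar>f (sigma T t) - f s - D * (sigma T t - s)\<bar> \<le> e * \<bar>sigma T t - s\<bar>)"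

definition rd_continuous_on :: "real set \<Rightarrow> real set \<Rightarrow> (real \<Rightarrow> real) \<Rightarrow> bool" where
  "rd_continuous_on T S h \<longleftrightarrow> (\<forall>t\<in>S.
     ((sigma T t = t \<and> (\<exists>s\<in>T. s > t)) \<longrightarrow> continuous (at t within S) h) \<and>
     (\<exists>L. (h \<longlongrightarrow> L) (at t within (S \<inter> {..<t}))))"

definition delta_integral :: "real set \<Rightarrow> (real \<Rightarrow> real) \<Rightarrow> real \<Rightarrow> real \<Rightarrow> real" where
  "delta_integral T h r t = (THE I. \<exists>F. continuous_on ({r..t} \<inter> T) F \<and>
      (\<forall>\<tau>\<in>{r..<t} \<inter> T. has_delta_derivative T F (h \<tau>) \<tau>) \<and> I = F t - F r)"

text \<open>Time-scale exponential e_d(t,s) for t, s in [a,b]_T: the value at t of the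
  unique solution of x^Delta = d x on [a,b]_T with x(s) = 1.\<close>
definition texp :: "real set \<Rightarrow> real \<Rightarrow> real \<Rightarrow> (real \<Rightarrow> real) \<Rightarrow> real \<Rightarrow> real \<Rightarrow> real" where
  "texp T a b d t s = (THE v. \<exists>x. x s = 1 \<and> continuous_on ({a..b} \<inter> T) x \<and>
      (\<forall>r\<in>{a..<b} \<inter> T. has_delta_derivative T x (d r * x r) r) \<and> v = x t)"

end

theory Submission
  imports Defs
begin


lemma sigma_ge: "t \<le> sigma T t"
proof (cases "\<exists>s\<in>T. s > t")
  case True
  then show ?thesis unfolding sigma_def
    by (auto intro!: cInf_greatest)
qed (simp add: sigma_def)

lemma sigma_le: assumes "s \<in> T" "t < s" shows "sigma T t \<le> s"
proof -
  have "bdd_below {s\<in>T. s > t}" by (rule bdd_belowI[of _ t]) auto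
  then show ?thesis using assms unfolding sigma_def by (auto intro!: cInf_lower)
qed

lemma sigma_in: assumes "closed T" "t \<in> T" shows "sigma T t \<in> T"
proof (cases "\<exists>s\<in>T. s > t")
  case True
  have bb: "bdd_below {s\<in>T. s > t}" by (rule bdd_belowI[of _ t]) auto
  have ne: "{s\<in>T. s > t} \<noteq> {}" using True by auto
  have "Inf {s\<in>T. s > t} \<in> closure {s\<in>T. s > t}" by (rule closure_contains_Inf[OF ne bb])
  also have "\<dots> \<subseteq> closure T" by (rule closure_mono) auto
  finally show ?thesis using True assms by (simp add: sigma_def)
qed (use assms in \<open>simp add: sigma_def\<close>)

lemma sigma_rd: assumes "sigma T t = t" "s \<in> T" "t < s" "\<delta> > 0"
  shows "\<exists>r\<in>T. t < r \<and> r < t + \<delta>"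
proof -
  have bb: "bdd_below {s\<in>T. s > t}" by (rule bdd_belowI[of _ t]) auto
  have ne: "{s\<in>T. s > t} \<noteq> {}" using assms by auto
  have "Inf {s\<in>T. s > t} = t" using assms unfolding sigma_def by (auto split: if_splits)
  then have "Inf {s\<in>T. s > t} < t + \<delta>" using assms by simp
  then obtain r where "r \<in> {s\<in>T. s > t}" "r < t + \<delta>"
    using cInf_less_iff[OF ne bb] by blast
  then show ?thesis by auto
qed

definition Rp :: "real set \<Rightarrow> real \<Rightarrow> real \<Rightarrow> real" where
  "Rp K a u = (if u \<le> a then a else Sup {r\<in>K. r \<le> u})"

locale tsK =
  fixes T :: "real set" and a b :: real
  assumes clT: "closed T" and aT: "a \<in> T" and bT: "b \<in> T" and ab: "a < b"
begin

abbreviation "K \<equiv> {a..b} \<inter> T"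
abbreviation "R \<equiv> Rp K a"

lemma closedK: "closed K" using clT by (intro closed_Int) auto
lemma compactK: "compact K" using closedK by (simp add: compact_eq_bounded_closed bounded_Int)
lemma aK: "a \<in> K" using aT ab by auto
lemma bK: "b \<in> K" using bT ab by auto

lemma R_props: "R u \<in> K" "a \<le> R u" "R u \<le> max a u"
proof -
  show "R u \<in> K"
  proof (cases "u \<le> a")
    case False
    have "Sup {r\<in>K. r \<le> u} \<in> {r\<in>K. r \<le> u}"
      apply (rule closed_contains_Sup)
      using aK False apply force
       apply (rule bdd_aboveI[of _ u]) apply force
      proof - have "{r\<in>K. r \<le> u} = K \<inter> {..u}" by auto then show "closed {r\<in>K. r \<le> u}" using closed_Int[OF closedK closed_atMost[of u]] by simp qed
    then show ?thesis using False by (simp add: Rp_def)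
  qed (use aK in \<open>simp add: Rp_def\<close>)
  then show "a \<le> R u" by auto
  show "R u \<le> max a u"
    using aK by (auto simp: Rp_def intro!: cSup_least)
qed

lemma R_ge: assumes "r \<in> K" "r \<le> u" shows "r \<le> R u"
proof (cases "u \<le> a")
  case False
  show ?thesis using False assms unfolding Rp_def
    by (auto intro!: cSup_upper bdd_aboveI[of _ u])
qed (use assms in \<open>auto simp: Rp_def\<close>)

lemma R_le: assumes "t \<in> K" "\<And>r. r \<in> K \<Longrightarrow> r \<le> u \<Longrightarrow> r \<le> t" shows "R u \<le> t"
  using assms aK unfolding Rp_def by (auto intro!: cSup_least)

lemma R_mono: "mono R"
proof (rule monoI)
  fix u v :: real assume "u \<le> v"
  show "R u \<le> R v"
  proof (cases "u \<le> a")
    case True then show ?thesis using R_props(2)[of v] by (simp add: Rp_def)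
  next
    case False
    then show ?thesis using R_props[of u] \<open>u \<le> v\<close> by (intro R_ge) auto
  qed
qed

lemma R_id: "t \<in> K \<Longrightarrow> R t = t"
  using R_ge[of t t] R_props(3)[of t] by auto

lemma R_near:
  assumes t: "t \<in> K" and s: "s \<in> T"
    and u: "min s (sigma T t) < u" "u < max s (sigma T t)"
  shows "\<bar>R u - t\<bar> \<le> \<bar>s - t\<bar>"
proof (cases "s \<le> t")
  case True
  have st: "s \<le> sigma T t" using True sigma_ge[of t T] by linarith
  then have u1: "s < u" "u < sigma T t" using u by auto
  have up: "R u \<le> t"
  proof (rule R_le[OF t])
    fix r assume "r \<in> K" "r \<le> u"
    show "r \<le> t"
    proof (rule ccontr)
      assume "\<not> r \<le> t"
      then have "sigma T t \<le> r" using \<open>r \<in> K\<close> by (intro sigma_le) auto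
      then show False using u1 \<open>r \<le> u\<close> by linarith
    qed
  qed
  have lo: "s \<le> R u"
  proof (cases "a \<le> s")
    case True
    then have "s \<in> K" using s t \<open>s \<le> t\<close> by auto
    then show ?thesis using u1 by (intro R_ge) auto
  next
    case False then show ?thesis using R_props(2)[of u] by linarith
  qed
  show ?thesis using up lo True by linarith
next
  case False
  then have "sigma T t \<le> s" using s by (intro sigma_le) auto
  then have u1: "sigma T t < u" "u < s" using u by auto
  then have "t < u" using sigma_ge[of t T] by linarith
  then have "t \<le> R u" using t by (intro R_ge) auto
  moreover have "R u \<le> u" using R_props(3)[of u] t \<open>t < u\<close> by auto
  ultimately show ?thesis using u1 False by linarith
qed

end


context tsK begin

lemma R_integrable:
  fixes G :: "real \<Rightarrow> real"
  assumes G: "continuous_on K G"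
  shows "(\<lambda>u. G (R u)) integrable_on {\<alpha>..\<beta>}"
proof -
  obtain G' where G': "continuous_on UNIV G'" "\<And>x. x \<in> K \<Longrightarrow> G' x = G x"
    using Tietze_unbounded[OF G, of UNIV] closedK by auto
  have eq: "(\<lambda>u. G (R u)) = (\<lambda>u. G' (R u))" using G'(2) R_props(1) by auto
  obtain B where "\<forall>x\<in>G ` K. norm x \<le> B"
    using compact_imp_bounded[OF compact_continuous_image[OF G compactK]]
    unfolding bounded_iff by blast
  then have B: "\<And>r. r \<in> K \<Longrightarrow> norm (G r) \<le> B" by blast
  have "R \<in> borel_measurable borel" using R_mono borel_measurable_mono by blast
  moreover have "G' \<in> borel_measurable borel" using G' borel_measurable_continuous_onI by blast
  ultimately have "(\<lambda>u. G' (R u)) \<in> borel_measurable borel"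
    by (metis (no_types) measurable_compose)
  then have m: "(\<lambda>u. G' (R u)) \<in> borel_measurable (lebesgue_on {\<alpha>..\<beta>})"
    by (simp add: measurable_completion measurable_restrict_space1)
  have "(\<lambda>u. G' (R u)) integrable_on {\<alpha>..\<beta>}"
    apply (rule measurable_bounded_by_integrable_imp_integrable[OF m, of "\<lambda>_. B"])
    using B G'(2) R_props(1) by auto
  then show ?thesis using eq by simp
qed

end

lemma delta_deriv_at_sigma:
  assumes "has_delta_derivative T z D t"
  shows "z (sigma T t) = z t + (sigma T t - t) * D"
proof -
  have tT: "t \<in> T" using assms by (simp add: has_delta_derivative_def)
  have "\<bar>z (sigma T t) - z t - D * (sigma T t - t)\<bar> \<le> e * \<bar>sigma T t - t\<bar>" if e0: "e > 0" for e
  proof -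
    obtain \<delta> where "\<delta> > 0" "\<forall>s\<in>T. \<bar>s - t\<bar> < \<delta> \<longrightarrow>
        \<bar>z (sigma T t) - z s - D * (sigma T t - s)\<bar> \<le> e * \<bar>sigma T t - s\<bar>"
      using assms e0 unfolding has_delta_derivative_def by meson
    then show ?thesis using tT by auto
  qed
  then have X: "\<bar>z (sigma T t) - z t - D * (sigma T t - t)\<bar> \<le> 0 + e" if "e > 0" for e
  proof -
    define c where "c = \<bar>sigma T t - t\<bar>"
    have c0: "c \<ge> 0" by (simp add: c_def)
    have "\<bar>z (sigma T t) - z t - D * (sigma T t - t)\<bar> \<le> (e / (c+1)) * c"
      using \<open>\<And>e. e > 0 \<Longrightarrow> _\<close>[of "e/(c+1)"] that c0 by (simp add: c_def)
    also have "\<dots> \<le> e" using c0 that by (simp add: field_simps)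
    finally show ?thesis by simp
  qed
  then have "\<bar>z (sigma T t) - z t - D * (sigma T t - t)\<bar> \<le> 0"
    by (rule field_le_epsilon)
  then show ?thesis by (simp add: algebra_simps)
qed

lemma delta_deriv_cont:
  assumes "has_delta_derivative T z D t"
  shows "continuous (at t within T) z"
proof -
  have tT: "t \<in> T" using assms by (simp add: has_delta_derivative_def)
  define m where "m = sigma T t - t"
  have m0: "m \<ge> 0" using sigma_ge[of t T] by (simp add: m_def)
  show ?thesis unfolding continuous_within_eps_delta
  proof (intro allI impI)
    fix \<epsilon> :: real assume "\<epsilon> > 0"
    define e where "e = \<epsilon> / 4 / (m + 1)"
    have m1: "m + 1 \<noteq> 0" using m0 by linarith
    have m4: "4 * m + 4 \<noteq> 0" using m0 by linarith
    have e0: "e > 0" using \<open>\<epsilon>>0\<close> m0 by (simp add: e_def)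
    obtain \<delta>1 where d1: "\<delta>1 > 0" "\<forall>s\<in>T. \<bar>s - t\<bar> < \<delta>1 \<longrightarrow>
        \<bar>z (sigma T t) - z s - D * (sigma T t - s)\<bar> \<le> e * \<bar>sigma T t - s\<bar>"
      using assms e0 unfolding has_delta_derivative_def by blast
    define \<delta> where "\<delta> = min \<delta>1 (min 1 (\<epsilon> / (2 * (\<bar>D\<bar> + 1))))"
    have d0: "\<delta> > 0" using d1 \<open>\<epsilon>>0\<close> by (simp add: \<delta>_def)
    have "dist (z s) (z t) < \<epsilon>" if s: "s \<in> T" "dist s t < \<delta>" for s
    proof -
      have st: "\<bar>s - t\<bar> < \<delta>" using s by (simp add: dist_real_def)
      have A: "\<bar>z (sigma T t) - z s - D * (sigma T t - s)\<bar> \<le> e * \<bar>sigma T t - s\<bar>"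
        using d1 s st by (auto simp: \<delta>_def)
      have B: "\<bar>z (sigma T t) - z t - D * (sigma T t - t)\<bar> \<le> e * \<bar>sigma T t - t\<bar>"
        using d1 tT by auto
      have C: "\<bar>sigma T t - s\<bar> \<le> m + 1" using st m0 unfolding m_def \<delta>_def by auto
      have C2: "\<bar>sigma T t - t\<bar> \<le> m + 1" using m0 unfolding m_def by auto
      have "e * \<bar>sigma T t - s\<bar> \<le> e * (m+1)" using C e0 by (intro mult_left_mono) auto
      moreover have "e * \<bar>sigma T t - t\<bar> \<le> e * (m+1)" using C2 e0 by (intro mult_left_mono) auto
      moreover have "e * (m+1) = \<epsilon> / 4" using m1 m4 by (simp add: e_def field_simps)
      moreover have "\<bar>D\<bar> * \<bar>s - t\<bar> < \<epsilon> / 2"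
      proof -
        have "\<bar>D\<bar> * \<bar>s - t\<bar> \<le> \<bar>D\<bar> * (\<epsilon> / (2 * (\<bar>D\<bar> + 1)))"
          using st by (intro mult_left_mono) (auto simp: \<delta>_def)
        also have "\<dots> < \<epsilon> / 2" using \<open>\<epsilon>>0\<close> by (simp add: field_simps)
        finally show ?thesis .
      qed
      moreover have "\<bar>z s - z t\<bar> \<le> \<bar>z (sigma T t) - z s - D * (sigma T t - s)\<bar>
          + \<bar>z (sigma T t) - z t - D * (sigma T t - t)\<bar> + \<bar>D\<bar> * \<bar>s - t\<bar>"
        by (simp add: abs_mult[symmetric] algebra_simps)
      ultimately show ?thesis using A B by (simp add: dist_real_def)
    qed
    then show "\<exists>d>0. \<forall>x'\<in>T. dist x' t < d \<longrightarrow> dist (z x') (z t) < \<epsilon>" using d0 by blast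
  qed
qed

lemma delta_deriv_diff:
  assumes "has_delta_derivative T f D t" "has_delta_derivative T g E t"
  shows "has_delta_derivative T (\<lambda>x. f x - g x) (D - E) t"
  unfolding has_delta_derivative_def
proof (intro conjI allI impI)
  show "t \<in> T" using assms by (simp add: has_delta_derivative_def)
  fix e :: real assume "e > 0"
  obtain d1 where d1: "d1 > 0" "\<forall>s\<in>T. \<bar>s - t\<bar> < d1 \<longrightarrow>
        \<bar>f (sigma T t) - f s - D * (sigma T t - s)\<bar> \<le> (e/2) * \<bar>sigma T t - s\<bar>"
    using assms(1) \<open>e>0\<close> unfolding has_delta_derivative_def by (meson half_gt_zero)
  obtain d2 where d2: "d2 > 0" "\<forall>s\<in>T. \<bar>s - t\<bar> < d2 \<longrightarrow>
        \<bar>g (sigma T t) - g s - E * (sigma T t - s)\<bar> \<le> (e/2) * \<bar>sigma T t - s\<bar>"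
    using assms(2) \<open>e>0\<close> unfolding has_delta_derivative_def by (meson half_gt_zero)
  show "\<exists>\<delta>>0. \<forall>s\<in>T. \<bar>s - t\<bar> < \<delta> \<longrightarrow>
      \<bar>f (sigma T t) - g (sigma T t) - (f s - g s) - (D - E) * (sigma T t - s)\<bar> \<le> e * \<bar>sigma T t - s\<bar>"
  proof (intro exI[of _ "min d1 d2"] conjI ballI impI)
    show "min d1 d2 > 0" using d1 d2 by simp
    fix s assume "s \<in> T" "\<bar>s - t\<bar> < min d1 d2"
    then have A: "\<bar>f (sigma T t) - f s - D * (sigma T t - s)\<bar> \<le> (e/2) * \<bar>sigma T t - s\<bar>"
      and B: "\<bar>g (sigma T t) - g s - E * (sigma T t - s)\<bar> \<le> (e/2) * \<bar>sigma T t - s\<bar>"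
      using d1 d2 by auto
    have "\<bar>f (sigma T t) - g (sigma T t) - (f s - g s) - (D - E) * (sigma T t - s)\<bar>
       \<le> \<bar>f (sigma T t) - f s - D * (sigma T t - s)\<bar> + \<bar>g (sigma T t) - g s - E * (sigma T t - s)\<bar>"
      by (simp add: algebra_simps)
    then show "\<bar>f (sigma T t) - g (sigma T t) - (f s - g s) - (D - E) * (sigma T t - s)\<bar> \<le> e * \<bar>sigma T t - s\<bar>"
      using A B by linarith
  qed
qed



context tsK begin

lemma deriv_integral:
  fixes G :: "real \<Rightarrow> real"
  assumes G: "continuous_on K G" and t: "t \<in> K"
  shows "has_delta_derivative T (\<lambda>\<tau>. C + integral {a-1..\<tau>} (\<lambda>u. G (R u))) (G t) t"
  unfolding has_delta_derivative_def
proof (intro conjI allI impI)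
  show "t \<in> T" using t by auto
  fix e::real assume e: "e > 0"
  obtain \<delta>0 where d0: "\<delta>0 > 0" "\<forall>r\<in>K. dist r t < \<delta>0 \<longrightarrow> dist (G r) (G t) < e"
    using G t e unfolding continuous_on_iff by blast
  define F where "F = (\<lambda>u. G (R u))"
  have key: "\<bar>(C + integral {a-1..sigma T t} F) - (C + integral {a-1..s} F) - G t * (sigma T t - s)\<bar>
        \<le> e * \<bar>sigma T t - s\<bar>" if s: "s \<in> T" "\<bar>s - t\<bar> < min \<delta>0 1" for s
  proof -
    define p where "p = min s (sigma T t)"
    define q where "q = max s (sigma T t)"
    have st: "t \<le> sigma T t" by (rule sigma_ge)
    have pq: "a - 1 \<le> p" "p \<le> q" using s t st by (auto simp: p_def q_def)
    have int: "F integrable_on {a-1..q}" by (simp add: F_def R_integrable[OF G])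
    have comb: "integral {a-1..p} F + integral {p..q} F = integral {a-1..q} F"
      using Henstock_Kurzweil_Integration.integral_combine[where f=F and a="a-1" and c=p and b=q] pq int by simp
    have hi: "((\<lambda>u. F u - G t) has_integral (integral {p..q} F - (q - p) * G t)) {p..q}"
      using has_integral_diff[OF integrable_integral[OF R_integrable[OF G, of p q]] has_integral_const_real[of "G t" p q]] pq
      by (simp add: F_def)
    have bx: "norm (F x - G t) \<le> e" if x: "x \<in> {p..q} - {p, q}" for x
    proof -
      from x have "min s (sigma T t) < x" "x < max s (sigma T t)" by (auto simp: p_def q_def)
      then have "\<bar>R x - t\<bar> \<le> \<bar>s - t\<bar>" by (rule R_near[OF t s(1)])
      then have "dist (R x) t < \<delta>0" using s by (simp add: dist_real_def)
      then have "dist (G (R x)) (G t) < e" using d0 R_props(1) by blast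
      then show "norm (F x - G t) \<le> e" by (simp add: F_def dist_real_def)
    qed
    have bnd: "\<bar>integral {p..q} F - (q - p) * G t\<bar> \<le> e * (q - p)"
      using has_integral_bound_real[OF _ _ hi, of e "{p,q}"] bx e pq by simp
    show ?thesis
    proof (cases "s \<le> sigma T t")
      case True
      then have "p = s" "q = sigma T t" by (auto simp: p_def q_def)
      then show ?thesis using comb bnd True by (simp add: algebra_simps)
    next
      case False
      then have "p = sigma T t" "q = s" by (auto simp: p_def q_def)
      then have "\<bar>(C + integral {a-1..sigma T t} F) - (C + integral {a-1..s} F) - G t * (sigma T t - s)\<bar>
          = \<bar>integral {p..q} F - (q - p) * G t\<bar>"
        using comb by (simp add: algebra_simps abs_minus_commute)
      then show ?thesis using bnd False `p = sigma T t` `q = s` by simp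
    qed
  qed
  show "\<exists>\<delta>>0. \<forall>s\<in>T. \<bar>s - t\<bar> < \<delta> \<longrightarrow>
          \<bar>C + integral {a - 1..sigma T t} (\<lambda>u. G (R u)) - (C + integral {a - 1..s} (\<lambda>u. G (R u))) -
           G t * (sigma T t - s)\<bar> \<le> e * \<bar>sigma T t - s\<bar>"
    using key d0(1) unfolding F_def by (intro exI[of _ "min \<delta>0 1"]) auto
qed

end


context tsK begin

lemma ts_induct:
  assumes S: "S \<subseteq> K" "closed S" "a \<in> S"
    and step: "\<And>t. t \<in> S \<Longrightarrow> t < b \<Longrightarrow> t < sigma T t \<Longrightarrow> sigma T t \<in> S"
    and rd: "\<And>t. t \<in> S \<Longrightarrow> t < b \<Longrightarrow> sigma T t = t \<Longrightarrow> \<exists>\<delta>>0. \<forall>s\<in>K. t < s \<and> s < t + \<delta> \<longrightarrow> s \<in> S"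
  shows "S = K"
proof -
  define A where "A = {t\<in>K. \<forall>s\<in>K. s \<le> t \<longrightarrow> s \<in> S}"
  have aA: "a \<in> A" using S aK by (auto simp: A_def)
  have bdd: "bdd_above A" by (rule bdd_aboveI[of _ b]) (auto simp: A_def)
  define c where "c = Sup A"
  have AS: "A \<subseteq> S" by (auto simp: A_def)
  have "c \<in> closure A" unfolding c_def using aA bdd by (intro closure_contains_Sup) auto
  also have "\<dots> \<subseteq> closure S" using AS by (rule closure_mono)
  finally have cS: "c \<in> S" using S(2) by simp
  have cK: "c \<in> K" using cS S by auto
  have cA: "c \<in> A"
    unfolding A_def
  proof (intro CollectI conjI ballI impI cK)
    fix s assume s: "s \<in> K" "s \<le> c"
    show "s \<in> S"
    proof (cases "s = c")
      case True then show ?thesis using cS by simp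
    next
      case False
      then have "s < Sup A" using s by (simp add: c_def)
      then obtain t where "t \<in> A" "s < t" using less_cSup_iff[of A s] aA bdd by auto
      then show ?thesis using s by (auto simp: A_def)
    qed
  qed
  have upper: "x \<le> c" if "x \<in> A" for x unfolding c_def using that bdd by (rule cSup_upper)
  have cb: "c = b"
  proof (rule ccontr)
    assume "c \<noteq> b"
    then have cb: "c < b" using cK by auto
    have cT: "c \<in> T" using cK by auto
    show False
    proof (cases "c < sigma T c")
      case True
      have sT: "sigma T c \<in> T" by (rule sigma_in[OF clT cT])
      have sb: "sigma T c \<le> b" by (rule sigma_le[OF bT cb])
      have sK: "sigma T c \<in> K" using sT sb True cK by auto
      have sS: "sigma T c \<in> S" using step[OF cS cb True] .
      have "sigma T c \<in> A"
        unfolding A_def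
      proof (intro CollectI conjI ballI impI sK)
        fix s assume s: "s \<in> K" "s \<le> sigma T c"
        show "s \<in> S"
        proof (cases "s \<le> c")
          case True then show ?thesis using cA s by (auto simp: A_def)
        next
          case False
          then have "sigma T c \<le> s" using s by (intro sigma_le) auto
          then have "s = sigma T c" using s by auto
          then show ?thesis using sS by simp
        qed
      qed
      then show False using upper True by force
    next
      case False
      then have sc: "sigma T c = c" using sigma_ge[of c T] by linarith
      obtain \<delta> where d: "\<delta> > 0" "\<forall>s\<in>K. c < s \<and> s < c + \<delta> \<longrightarrow> s \<in> S"
        using rd[OF cS cb sc] by blast
      obtain r where r: "r \<in> T" "c < r" "r < c + min \<delta> (b - c)"
        using sigma_rd[OF sc bT cb, of "min \<delta> (b - c)"] d cb by auto
      have rK: "r \<in> K" using r cK by auto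
      have "r \<in> A"
        unfolding A_def
      proof (intro CollectI conjI ballI impI rK)
        fix s assume s: "s \<in> K" "s \<le> r"
        show "s \<in> S"
        proof (cases "s \<le> c")
          case True then show ?thesis using cA s by (auto simp: A_def)
        next
          case False then show ?thesis using d s r by auto
        qed
      qed
      then show False using upper r by force
    qed
  qed
  show "S = K"
  proof
    show "S \<subseteq> K" using S by simp
    show "K \<subseteq> S" using cA cb by (auto simp: A_def)
  qed
qed

lemma cont_of_deriv:
  assumes "\<And>t. t \<in> K \<Longrightarrow> has_delta_derivative T z (\<zeta> t) t"
  shows "continuous_on K z"
  unfolding continuous_on_eq_continuous_within
proof
  fix t assume "t \<in> K"
  then have "continuous (at t within T) z" using assms delta_deriv_cont by blast
  then show "continuous (at t within K) z" by (rule continuous_within_subset) auto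
qed

lemma gronwall:
  fixes z \<zeta> :: "real \<Rightarrow> real"
  assumes D: "D > 0" and \<epsilon>: "\<epsilon> > 0"
    and der: "\<And>t. t \<in> K \<Longrightarrow> has_delta_derivative T z (\<zeta> t) t"
    and bnd: "\<And>t. t \<in> K \<Longrightarrow> \<bar>\<zeta> t\<bar> \<le> D * \<bar>z t\<bar> + \<epsilon>"
    and z0: "z a = 0"
    and t: "t \<in> K"
  shows "\<bar>z t\<bar> \<le> 2*\<epsilon>/D * (exp (D*(t-a)) - 1)"
proof -
  define c where "c = 2*\<epsilon>/D"
  have c0: "c > 0" using D \<epsilon> by (simp add: c_def)
  have cD: "c * D = 2 * \<epsilon>" using D by (simp add: c_def)
  define \<Phi> where "\<Phi> t = c * (exp (D*(t-a)) - 1)" for t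
  define S where "S = {t \<in> K. \<bar>z t\<bar> \<le> \<Phi> t}"
  have zc: "continuous_on K z" by (rule cont_of_deriv[OF der])
  have clS: "closed S" unfolding S_def \<Phi>_def
    by (intro continuous_on_closed_Collect_le closedK continuous_intros zc)
  have aS: "a \<in> S" using aK z0 by (simp add: S_def \<Phi>_def)
  have "S = K"
  proof (rule ts_induct[OF _ clS aS])
    show "S \<subseteq> K" by (auto simp: S_def)
  next
    fix t assume tS: "t \<in> S" and tb: "t < b" and ts: "t < sigma T t"
    have tK: "t \<in> K" using tS by (simp add: S_def)
    have sT: "sigma T t \<in> T" using tK by (intro sigma_in[OF clT]) auto
    have sb: "sigma T t \<le> b" by (rule sigma_le[OF bT tb])
    have sK: "sigma T t \<in> K" using sT sb ts tK by auto
    define m where "m = sigma T t - t"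
    have m0: "m \<ge> 0" using ts by (simp add: m_def)
    define E where "E = exp (D*(t-a))"
    have zs: "z (sigma T t) = z t + m * \<zeta> t"
      using delta_deriv_at_sigma[OF der[OF tK]] by (simp add: m_def)
    have h1: "\<bar>z (sigma T t)\<bar> \<le> \<bar>z t\<bar> + m * \<bar>\<zeta> t\<bar>"
    proof -
      have "\<bar>m * \<zeta> t\<bar> = m * \<bar>\<zeta> t\<bar>" using m0 by (simp add: abs_mult)
      then show ?thesis using abs_triangle_ineq[of "z t" "m * \<zeta> t"] zs by simp
    qed
    have h2: "m * \<bar>\<zeta> t\<bar> \<le> m * (D * \<bar>z t\<bar> + \<epsilon>)"
      using bnd[OF tK] m0 by (rule mult_left_mono)
    have h3: "\<bar>z t\<bar> \<le> c * (E - 1)" using tS by (simp add: S_def \<Phi>_def E_def)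
    have h4: "\<bar>z t\<bar> * (1 + m*D) \<le> c * (E - 1) * (1 + m*D)"
      using h3 m0 D by (intro mult_right_mono) auto
    have h5: "E * (1 + m*D) \<le> E * exp (D*m)"
      using exp_ge_add_one_self[of "D*m"] by (intro mult_left_mono) (auto simp: E_def algebra_simps)
    have h6: "c * (E * (1 + m*D)) \<le> c * (E * exp (D*m))"
      using mult_left_mono[OF h5, of c] c0 by simp
    have eq: "\<Phi> (sigma T t) = c * (E * exp (D*m) - 1)"
      by (simp add: \<Phi>_def E_def m_def exp_add[symmetric] algebra_simps)
    have "\<bar>z (sigma T t)\<bar> \<le> \<bar>z t\<bar> + m * (D * \<bar>z t\<bar> + \<epsilon>)" using h1 h2 by linarith
    also have "\<dots> = \<bar>z t\<bar> * (1 + m*D) + m*\<epsilon>" by (simp add: algebra_simps)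
    also have "\<dots> \<le> c * (E - 1) * (1 + m*D) + m*\<epsilon>" using h4 by linarith
    also have "\<dots> = c * (E * (1 + m*D)) - c - m * (c * D) + m*\<epsilon>" by (simp add: algebra_simps)
    also have "\<dots> = c * (E * (1 + m*D)) - c - m*\<epsilon>" using cD by simp
    also have "\<dots> \<le> c * (E * exp (D*m)) - c" using h6 mult_nonneg_nonneg[OF m0, of \<epsilon>] \<epsilon> by linarith
    also have "\<dots> = \<Phi> (sigma T t)" unfolding eq by (simp add: algebra_simps)
    finally have "\<bar>z (sigma T t)\<bar> \<le> \<Phi> (sigma T t)" .
    then show "sigma T t \<in> S" using sK by (simp add: S_def)
  next
    fix t assume tS: "t \<in> S" and tb: "t < b" and sc: "sigma T t = t"
    have tK: "t \<in> K" using tS by (simp add: S_def)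
    obtain \<delta> where d: "\<delta> > 0" "\<forall>s\<in>T. \<bar>s - t\<bar> < \<delta> \<longrightarrow>
        \<bar>z (sigma T t) - z s - \<zeta> t * (sigma T t - s)\<bar> \<le> \<epsilon> * \<bar>sigma T t - s\<bar>"
    proof -
      have hd: "\<forall>e>0. \<exists>\<delta>>0. \<forall>s\<in>T. \<bar>s - t\<bar> < \<delta> \<longrightarrow>
        \<bar>z (sigma T t) - z s - \<zeta> t * (sigma T t - s)\<bar> \<le> e * \<bar>sigma T t - s\<bar>"
        using der[OF tK] unfolding has_delta_derivative_def by (rule conjunct2)
      show ?thesis using hd[rule_format, OF \<epsilon>] that by blast
    qed
    define E where "E = exp (D*(t-a))"
    have h3: "\<bar>z t\<bar> \<le> c * (E - 1)" using tS by (simp add: S_def \<Phi>_def E_def)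
    have "s \<in> S" if s: "s \<in> K" "t < s" "s < t + \<delta>" for s
    proof -
      have A: "\<bar>z t - z s - \<zeta> t * (t - s)\<bar> \<le> \<epsilon> * (s - t)"
        using d(2) s sc by auto
      have m1: "\<bar>\<zeta> t * (t - s)\<bar> = \<bar>\<zeta> t\<bar> * (s - t)" using s by (simp add: abs_mult)
      have e1: "\<bar>z s\<bar> \<le> \<bar>z t - \<zeta> t * (t - s)\<bar> + \<bar>z t - z s - \<zeta> t * (t - s)\<bar>"
        using abs_triangle_ineq4[of "z t - \<zeta> t * (t - s)" "z t - z s - \<zeta> t * (t - s)"] by simp
      have e2: "\<bar>z t - \<zeta> t * (t - s)\<bar> \<le> \<bar>z t\<bar> + \<bar>\<zeta> t * (t - s)\<bar>" by (rule abs_triangle_ineq4)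
      have tri: "\<bar>z s\<bar> \<le> \<bar>z t\<bar> + \<bar>\<zeta> t * (t - s)\<bar> + \<bar>z t - z s - \<zeta> t * (t - s)\<bar>"
        using e1 e2 by linarith
      have h1: "\<bar>z s\<bar> \<le> \<bar>z t\<bar> + \<bar>\<zeta> t\<bar> * (s - t) + \<epsilon> * (s - t)"
        using tri m1 A by linarith
      have zb: "\<bar>\<zeta> t\<bar> \<le> D * (c * (E - 1)) + \<epsilon>"
        using bnd[OF tK] mult_left_mono[OF h3, of D] D by linarith
      have h2: "\<bar>\<zeta> t\<bar> * (s - t) \<le> (D * (c * (E - 1)) + \<epsilon>) * (s - t)"
        using zb s by (intro mult_right_mono) auto
      have h5: "E * (1 + D*(s-t)) \<le> E * exp (D*(s-t))"
        using exp_ge_add_one_self[of "D*(s-t)"] by (intro mult_left_mono) (auto simp: E_def)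
      have h6: "c * (E * (1 + D*(s-t))) \<le> c * (E * exp (D*(s-t)))"
        using mult_left_mono[OF h5, of c] c0 by simp
      have eq: "\<Phi> s = c * (E * exp (D*(s-t)) - 1)"
        by (simp add: \<Phi>_def E_def exp_add[symmetric] algebra_simps)
      have dc: "D * (c * x) = 2 * \<epsilon> * x" for x
      proof - have "D * (c * x) = (c * D) * x" by (simp add: ac_simps) then show ?thesis using cD by simp qed
      have "\<bar>z s\<bar> \<le> c * (E - 1) + (D * (c * (E - 1)) + \<epsilon>) * (s - t) + \<epsilon> * (s - t)"
        using h1 h2 h3 by linarith
      also have "\<dots> = c * (E - 1) + 2 * \<epsilon> * (E - 1) * (s - t) + 2 * \<epsilon> * (s - t)"
        unfolding dc by (simp add: algebra_simps)
      also have "\<dots> = c * E - c + 2 * \<epsilon> * (E * (s - t))" by (simp add: algebra_simps)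
      also have "\<dots> = c * E - c + D * (c * (E * (s - t)))" unfolding dc ..
      also have "\<dots> = c * (E * (1 + D*(s-t))) - c" by (simp add: algebra_simps)
      also have "\<dots> \<le> c * (E * exp (D*(s-t))) - c" using h6 by linarith
      also have "\<dots> = \<Phi> s" unfolding eq by (simp add: algebra_simps)
      finally have "\<bar>z s\<bar> \<le> \<Phi> s" .
      then show ?thesis using s by (simp add: S_def)
    qed
    then show "\<exists>\<delta>>0. \<forall>s\<in>K. t < s \<and> s < t + \<delta> \<longrightarrow> s \<in> S" using d(1) by blast
  qed
  then have "t \<in> S" using t by simp
  then show ?thesis by (simp add: S_def \<Phi>_def c_def)
qed

end


context tsK begin

lemma exp_integral:
  fixes M Dd x :: real
  assumes "a \<le> x"
  shows "((\<lambda>u. M * (exp (2*M*(u-a)) * Dd)) has_integral (Dd * (exp (2*M*(x-a)) - 1) / 2)) {a..x}"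
proof -
  have "((\<lambda>u. M * (exp (2*M*(u-a)) * Dd)) has_integral
      ((\<lambda>u. Dd * exp (2*M*(u-a)) / 2) x - (\<lambda>u. Dd * exp (2*M*(u-a)) / 2) a)) {a..x}"
  proof (rule fundamental_theorem_of_calculus[OF assms])
    fix u assume "u \<in> {a..x}"
    show "((\<lambda>u. Dd * exp (2*M*(u-a)) / 2) has_vector_derivative M * (exp (2*M*(u-a)) * Dd)) (at u within {a..x})"
      unfolding has_real_derivative_iff_has_vector_derivative[symmetric]
      by (auto intro!: derivative_eq_intros simp: algebra_simps)
  qed
  then show ?thesis by (simp add: algebra_simps diff_divide_distrib)
qed

lemma exists_solution:
  fixes d f :: "real \<Rightarrow> real"
  assumes dc: "continuous_on K d" and fc: "continuous_on K f"
  shows "\<exists>y. y a = x0 \<and> (\<forall>t\<in>K. has_delta_derivative T y (d t * y t + f t) t)"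
proof -
  obtain M0 where "\<forall>x\<in>d ` K. norm x \<le> M0"
    using compact_imp_bounded[OF compact_continuous_image[OF dc compactK]]
    unfolding bounded_iff by blast
  then have M0: "\<And>r. r \<in> K \<Longrightarrow> \<bar>d r\<bar> \<le> M0" by auto
  define M where "M = \<bar>M0\<bar> + 1"
  have Mpos: "M > 0" by (simp add: M_def)
  have Mb: "\<And>r. r \<in> K \<Longrightarrow> \<bar>d r\<bar> \<le> M" using M0 by (force simp: M_def)
  define cl where "cl \<tau> = max a (min b \<tau>)" for \<tau>
  have clc: "continuous_on UNIV cl" unfolding cl_def by (intro continuous_intros)
  have clab: "cl \<tau> \<in> {a..b}" for \<tau> using ab by (auto simp: cl_def)
  have clid: "x \<in> {a..b} \<Longrightarrow> cl x = x" for x by (auto simp: cl_def)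
  define E where "E \<tau> = exp (2*M*(cl \<tau> - a))" for \<tau>
  have Ec: "continuous_on UNIV E" unfolding E_def by (intro continuous_intros clc)
  have Epos: "E \<tau> > 0" for \<tau> by (simp add: E_def)
  define F where "F p = (\<lambda>u. d (R u) * (E (R u) * p (R u)) + f (R u))" for p :: "real \<Rightarrow> real"
  define \<Phi> where "\<Phi> p \<tau> = x0 + integral {a..cl \<tau>} (F p)" for p \<tau>
  have Gc: "continuous_on K (\<lambda>r. d r * (E r * p r) + f r)" if "continuous_on UNIV p" for p
    by (intro continuous_intros dc fc continuous_on_subset[OF Ec] continuous_on_subset[OF that]) auto
  have Fint: "F p integrable_on {\<alpha>..\<beta>}" if "continuous_on UNIV p" for p \<alpha> \<beta>
    using R_integrable[OF Gc[OF that]] by (simp add: F_def)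
  have \<Phi>c: "continuous_on UNIV (\<Phi> p)" if "continuous_on UNIV p" for p
  proof -
    have "continuous_on {a..b} (\<lambda>x. integral {a..x} (F p))"
      by (rule indefinite_integral_continuous_1[OF Fint[OF that]])
    then have "continuous_on UNIV (\<lambda>\<tau>. integral {a..cl \<tau>} (F p))"
      by (rule continuous_on_compose2[OF _ clc]) (use clab in auto)
    then show ?thesis unfolding \<Phi>_def by (intro continuous_intros)
  qed
  define \<Psi>f where "\<Psi>f p \<tau> = \<Phi> p \<tau> / E \<tau>" for p \<tau>
  have \<Psi>fc: "continuous_on UNIV (\<Psi>f p)" if "continuous_on UNIV p" for p
    unfolding \<Psi>f_def using Epos by (intro continuous_intros \<Phi>c that Ec) (auto simp: less_le)
  have \<Psi>fcl: "\<Psi>f p \<tau> = \<Psi>f p (cl \<tau>)" for p \<tau>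
    using clid[OF clab[of \<tau>]] by (simp add: \<Psi>f_def \<Phi>_def E_def)
  have \<Psi>bc: "\<Psi>f (apply_bcontfun p) \<in> bcontfun" for p
  proof -
    have c: "continuous_on UNIV (\<Psi>f (apply_bcontfun p))" by (rule \<Psi>fc) simp
    have "range (\<Psi>f (apply_bcontfun p)) \<subseteq> \<Psi>f (apply_bcontfun p) ` {a..b}"
      using \<Psi>fcl clab by blast
    moreover have "bounded (\<Psi>f (apply_bcontfun p) ` {a..b})"
      by (intro compact_imp_bounded compact_continuous_image continuous_on_subset[OF c]) auto
    ultimately have "bounded (range (\<Psi>f (apply_bcontfun p)))" by (rule bounded_subset[rotated])
    then show ?thesis using c by (simp add: bcontfun_def)
  qed
  define \<Psi> where "\<Psi> p = Bcontfun (\<Psi>f (apply_bcontfun p))" for p :: "real \<Rightarrow>\<^sub>C real"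
  have \<Psi>app: "apply_bcontfun (\<Psi> p) = \<Psi>f (apply_bcontfun p)" for p
    unfolding \<Psi>_def using \<Psi>bc by (simp add: Bcontfun_inverse)
  have contr: "dist (\<Psi> p) (\<Psi> q) \<le> 1/2 * dist p q" for p q
  proof (rule dist_bound)
    fix \<tau>
    define x where "x = cl \<tau>"
    define Dd where "Dd = dist p q"
    have x: "a \<le> x" "x \<le> b" using clab by (auto simp: x_def)
    have pc: "continuous_on UNIV (apply_bcontfun p)" "continuous_on UNIV (apply_bcontfun q)" by auto
    have diff: "\<Phi> p \<tau> - \<Phi> q \<tau> = integral {a..x} (\<lambda>u. F p u - F q u)"
      unfolding \<Phi>_def x_def
      by (simp add: Henstock_Kurzweil_Integration.integral_diff[OF Fint[OF pc(1)] Fint[OF pc(2)]])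
    have "(\<lambda>u. F p u - F q u) integrable_on {a..x}"
      using Fint[OF pc(1)] Fint[OF pc(2)] by (rule integrable_diff)
    moreover have "(\<lambda>u. M * (exp (2*M*(u-a)) * Dd)) integrable_on {a..x}"
      using exp_integral[OF x(1)] by blast
    moreover have "norm (F p u - F q u) \<le> M * (exp (2*M*(u-a)) * Dd)" if u: "u \<in> {a..x}" for u
    proof -
      have RK: "R u \<in> K" by (rule R_props(1))
      have Ru: "R u \<le> u" using R_props(3)[of u] u by auto
      have "F p u - F q u = d (R u) * (E (R u) * (p (R u) - q (R u)))"
        by (simp add: F_def algebra_simps)
      moreover have "\<bar>d (R u)\<bar> \<le> M" using Mb[OF RK] .
      moreover have "E (R u) \<le> exp (2*M*(u-a))"
        using RK Ru Mpos clid[of "R u"] by (auto simp: E_def)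
      moreover have "\<bar>p (R u) - q (R u)\<bar> \<le> Dd"
        using dist_bounded[of p "R u" q] by (simp add: Dd_def dist_real_def)
      ultimately show ?thesis using Epos[of "R u"]
        by (simp add: abs_mult) (intro mult_mono, auto intro!: mult_mono)
    qed
    ultimately have "norm (integral {a..x} (\<lambda>u. F p u - F q u)) \<le> integral {a..x} (\<lambda>u. M * (exp (2*M*(u-a)) * Dd))"
      by (rule Henstock_Kurzweil_Integration.integral_norm_bound_integral)
    also have "\<dots> = Dd * (exp (2*M*(x-a)) - 1) / 2"
      using exp_integral[OF x(1)] by (rule integral_unique)
    finally have b1: "\<bar>\<Phi> p \<tau> - \<Phi> q \<tau>\<bar> \<le> Dd * (E \<tau> - 1) / 2"
      using diff by (simp add: E_def x_def)
    have Dd0: "Dd \<ge> 0" by (simp add: Dd_def)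
    have "\<bar>\<Psi>f p \<tau> - \<Psi>f q \<tau>\<bar> = \<bar>\<Phi> p \<tau> - \<Phi> q \<tau>\<bar> / E \<tau>"
      using Epos[of \<tau>] by (simp add: \<Psi>f_def diff_divide_distrib[symmetric])
    also have "\<dots> \<le> (Dd * (E \<tau> - 1) / 2) / E \<tau>"
      using b1 Epos[of \<tau>] by (intro divide_right_mono) auto
    also have "\<dots> \<le> Dd / 2"
      using Epos[of \<tau>] Dd0 by (simp add: field_simps)
    finally show "dist ((\<Psi> p) \<tau>) ((\<Psi> q) \<tau>) \<le> 1/2 * dist p q"
      by (simp add: \<Psi>app dist_real_def Dd_def)
  qed
  obtain p where pfix: "\<Psi> p = p"
    using banach_fix_type[of "1/2" \<Psi>] contr by auto
  define v where "v \<tau> = E \<tau> * p \<tau>" for \<tau>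
  have vfix: "v \<tau> = \<Phi> p \<tau>" for \<tau>
  proof -
    have "p \<tau> = \<Psi>f p \<tau>" using pfix \<Psi>app[of p] by metis
    then show ?thesis using Epos[of \<tau>] by (simp add: v_def \<Psi>f_def)
  qed
  have vc: "continuous_on UNIV v" unfolding v_def by (intro continuous_intros Ec) auto
  define \<psi> where "\<psi> r = d r * v r + f r" for r
  have \<psi>c: "continuous_on K \<psi>" unfolding \<psi>_def
    by (intro continuous_intros dc fc continuous_on_subset[OF vc]) auto
  have Fv: "F p = (\<lambda>u. \<psi> (R u))" by (simp add: F_def \<psi>_def v_def)
  define y where "y = (\<lambda>\<tau>. (x0 - \<psi> a) + integral {a-1..\<tau>} (\<lambda>u. \<psi> (R u)))"
  have yv: "y t = v t" if t: "t \<in> K" for t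
  proof -
    have ta: "a \<le> t" "t \<le> b" using t by auto
    have int: "(\<lambda>u. \<psi> (R u)) integrable_on {a-1..t}" by (rule R_integrable[OF \<psi>c])
    have comb: "integral {a-1..a} (\<lambda>u. \<psi> (R u)) + integral {a..t} (\<lambda>u. \<psi> (R u)) = integral {a-1..t} (\<lambda>u. \<psi> (R u))"
      using Henstock_Kurzweil_Integration.integral_combine[where f="\<lambda>u. \<psi> (R u)" and a="a-1" and c=a and b=t] ta int by simp
    have "integral {a-1..a} (\<lambda>u. \<psi> (R u)) = integral {a-1..a} (\<lambda>u. \<psi> a)"
      by (rule integral_cong) (simp add: Rp_def)
    also have "\<dots> = \<psi> a" by simp
    finally have i1: "integral {a-1..a} (\<lambda>u. \<psi> (R u)) = \<psi> a" .
    have "v t = x0 + integral {a..t} (F p)" using vfix[of t] clid[of t] ta by (simp add: \<Phi>_def)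
    also have "\<dots> = x0 + integral {a..t} (\<lambda>u. \<psi> (R u))" by (simp add: Fv)
    finally show ?thesis using comb i1 by (simp add: y_def)
  qed
  have "y a = x0" using yv[OF aK] vfix[of a] clid[of a] ab by (simp add: \<Phi>_def)
  moreover have "has_delta_derivative T y (d t * y t + f t) t" if t: "t \<in> K" for t
  proof -
    have "has_delta_derivative T y (\<psi> t) t"
      unfolding y_def by (rule deriv_integral[OF \<psi>c t])
    then show ?thesis using yv[OF t] by (simp add: \<psi>_def)
  qed
  ultimately show ?thesis by blast
qed

end


theorem mainTheorem2:
  fixes T :: "real set" and a b :: real and d f :: "real \<Rightarrow> real"
  assumes "time_scale T" and "a \<in> T" and "b \<in> T" and "a < b"
    and "continuous_on ({a..b} \<inter> T) d" and "continuous_on ({a..b} \<inter> T) f"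
    and "\<forall>t\<in>{a..b} \<inter> T. 1 + mu T t * d t \<noteq> 0"
    and "bdd_above ((\<lambda>t. \<bar>texp T a b d t a\<bar> *
           delta_integral T (\<lambda>s. \<bar>texp T a b d a (sigma T s)\<bar>) a t) ` ({a..b} \<inter> T))"
  shows "\<exists>L>0. \<forall>\<epsilon>>0. \<forall>g g'.
     ((\<forall>t\<in>{a..b} \<inter> T. has_delta_derivative T g (g' t) t) \<and>
      rd_continuous_on T ({a..b} \<inter> T) g' \<and>
      (\<forall>t\<in>{a..b} \<inter> T. \<bar>g' t - d t * g t - f t\<bar> \<le> \<epsilon>))
     \<longrightarrow> (\<exists>w w'. (\<forall>t\<in>{a..b} \<inter> T. has_delta_derivative T w (w' t) t) \<and>
              rd_continuous_on T ({a..b} \<inter> T) w' \<and>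
              (\<forall>t\<in>{a..b} \<inter> T. w' t - d t * w t - f t = 0) \<and>
              (\<forall>t\<in>{a..b} \<inter> T. \<bar>g t - w t\<bar> \<le> L * \<epsilon>))"
proof -
  interpret tsK T a b
    using assms(1-4) by unfold_locales (auto simp: time_scale_def)
  have dc: "continuous_on K d" and fc: "continuous_on K f" using assms(5,6) by auto
  obtain M0 where "\<forall>x\<in>d ` K. norm x \<le> M0"
    using compact_imp_bounded[OF compact_continuous_image[OF dc compactK]]
    unfolding bounded_iff by blast
  then have M0: "\<And>r. r \<in> K \<Longrightarrow> \<bar>d r\<bar> \<le> M0" by auto
  define D where "D = \<bar>M0\<bar> + 1"
  have Dpos: "D > 0" by (simp add: D_def)
  have Db: "\<And>r. r \<in> K \<Longrightarrow> \<bar>d r\<bar> \<le> D" using M0 by (force simp: D_def)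
  define L where "L = 2 * exp (D*(b-a)) / D"
  have Lpos: "L > 0" using Dpos by (simp add: L_def)
  show ?thesis
  proof (intro exI[of _ L] conjI allI impI Lpos)
    fix \<epsilon> :: real and g g' :: "real \<Rightarrow> real"
    assume \<epsilon>: "\<epsilon> > 0"
    assume H: "(\<forall>t\<in>{a..b} \<inter> T. has_delta_derivative T g (g' t) t) \<and>
      rd_continuous_on T ({a..b} \<inter> T) g' \<and>
      (\<forall>t\<in>{a..b} \<inter> T. \<bar>g' t - d t * g t - f t\<bar> \<le> \<epsilon>)"
    obtain y where y: "y a = g a" "\<forall>t\<in>K. has_delta_derivative T y (d t * y t + f t) t"
      using exists_solution[OF dc fc, of "g a"] by blast
    define w' where "w' t = d t * y t + f t" for t
    have yc: "continuous_on K y" using y(2) by (intro cont_of_deriv) blast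
    have w'c: "continuous_on K w'" unfolding w'_def by (intro continuous_intros dc fc yc)
    show "\<exists>w w'. (\<forall>t\<in>{a..b} \<inter> T. has_delta_derivative T w (w' t) t) \<and>
              rd_continuous_on T ({a..b} \<inter> T) w' \<and>
              (\<forall>t\<in>{a..b} \<inter> T. w' t - d t * w t - f t = 0) \<and>
              (\<forall>t\<in>{a..b} \<inter> T. \<bar>g t - w t\<bar> \<le> L * \<epsilon>)"
    proof (rule exI[of _ y], rule exI[of _ w'], intro conjI)
      show "\<forall>t\<in>{a..b} \<inter> T. has_delta_derivative T y (w' t) t" using y(2) by (simp add: w'_def)
      show "\<forall>t\<in>{a..b} \<inter> T. w' t - d t * y t - f t = 0" by (simp add: w'_def)
      show "rd_continuous_on T ({a..b} \<inter> T) w'"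
        unfolding rd_continuous_on_def
      proof (intro ballI conjI)
        fix t assume t: "t \<in> {a..b} \<inter> T"
        have ct: "continuous (at t within {a..b} \<inter> T) w'"
          using w'c t by (simp add: continuous_on_eq_continuous_within)
        then show "Defs.sigma T t = t \<and> (\<exists>s\<in>T. t < s) \<longrightarrow> continuous (at t within {a..b} \<inter> T) w'"
          by blast
        from ct have "(w' \<longlongrightarrow> w' t) (at t within {a..b} \<inter> T)" by (simp add: continuous_within)
        then have "(w' \<longlongrightarrow> w' t) (at t within {a..b} \<inter> T \<inter> {..<t})"
          by (rule tendsto_within_subset) auto
        then show "\<exists>L. (w' \<longlongrightarrow> L) (at t within {a..b} \<inter> T \<inter> {..<t})" by blast
      qed
      show "\<forall>t\<in>{a..b} \<inter> T. \<bar>g t - y t\<bar> \<le> L * \<epsilon>"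
      proof
        fix t assume t: "t \<in> {a..b} \<inter> T"
        have der: "has_delta_derivative T (\<lambda>x. g x - y x) (g' s - w' s) s" if "s \<in> K" for s
          using delta_deriv_diff[of T g "g' s" s y "w' s"] H y(2) that by (simp add: w'_def)
        have bnd: "\<bar>g' s - w' s\<bar> \<le> D * \<bar>g s - y s\<bar> + \<epsilon>" if s: "s \<in> K" for s
        proof -
          have "g' s - w' s = (g' s - d s * g s - f s) + d s * (g s - y s)"
            by (simp add: w'_def algebra_simps)
          moreover have "\<bar>g' s - d s * g s - f s\<bar> \<le> \<epsilon>" using H s by blast
          moreover have "\<bar>d s * (g s - y s)\<bar> \<le> D * \<bar>g s - y s\<bar>"
            unfolding abs_mult using Db[OF s] by (intro mult_right_mono) auto
          ultimately show ?thesis by linarith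
        qed
        have "\<bar>g t - y t\<bar> \<le> 2*\<epsilon>/D * (exp (D*(t-a)) - 1)"
          by (rule gronwall[OF Dpos \<epsilon> der bnd _ t]) (simp_all add: y(1))
        also have "\<dots> \<le> 2*\<epsilon>/D * exp (D*(b-a))"
        proof (rule mult_left_mono)
          have "D * (t - a) \<le> D * (b - a)" using t Dpos by (intro mult_left_mono) auto
          then have "exp (D * (t - a)) \<le> exp (D * (b - a))" by simp
          then show "exp (D * (t - a)) - 1 \<le> exp (D * (b - a))" by linarith
          show "0 \<le> 2 * \<epsilon> / D" using Dpos \<epsilon> by simp
        qed
        also have "\<dots> = L * \<epsilon>" by (simp add: L_def)
        finally show "\<bar>g t - y t\<bar> \<le> L * \<epsilon>" .
      qed
    qed
  qed
qed


end
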